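(* Let $n=2k+1$ with $k\ge 1$. Then $\{a_i,c_i : i=1,2,\ldots,n\}$ is a strong resolving set of $U_n$.
   Context: For $n\ge 3$, $U_n$ is the graph with vertex set $\{a_i,b_i,c_i,d_i,e_i : 1\le i\le n\}$ and edge set $\{a_ia_{i+1}, b_ib_{i+1}, e_ie_{i+1}, a_ib_i, b_ic_i, c_id_i, d_ie_i, c_{i+1}d_i : 1\le i\le n\}$, indices taken modulo $n$. $d$ is the graph distance. A vertex $w$ strongly resolves distinct vertices $u,v$ if $d(v,w)=d(v,u)+d(u,w)$ or $d(u,w)=d(u,v)+d(v,w)$. A set $S$ is a strong resolving set if every two distinct vertices are strongly resolved by some vertex of $S$. *)

theory Defs
  imports Main
begin

(* Vertices of U_n: a_i, b_i, c_i, d_i, e_i with indices i in {0..<n}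
   (paper's index i in {1..n} corresponds to i-1; indices modulo n). *)
datatype uvert = A nat | B nat | C nat | D nat | E nat

definition U_verts :: "nat \<Rightarrow> uvert set" where
  "U_verts n = (\<Union>i\<in>{0..<n}. {A i, B i, C i, D i, E i})"

definition U_edges :: "nat \<Rightarrow> (uvert \<times> uvert) set" where
  "U_edges n = (\<Union>i\<in>{0..<n}.
     {(A i, A (Suc i mod n)), (B i, B (Suc i mod n)), (E i, E (Suc i mod n)),
      (A i, B i), (B i, C i), (C i, D i), (D i, E i), (C (Suc i mod n), D i)})"

definition U_adj :: "nat \<Rightarrow> uvert \<Rightarrow> uvert \<Rightarrow> bool" where
  "U_adj n u v \<longleftrightarrow> (u, v) \<in> U_edges n \<or> (v, u) \<in> U_edges n"

definition is_walk :: "('a \<Rightarrow> 'a \<Rightarrow> bool) \<Rightarrow> 'a list \<Rightarrow> 'a \<Rightarrow> 'a \<Rightarrow> bool" where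
  "is_walk adj p u v \<longleftrightarrow> p \<noteq> [] \<and> hd p = u \<and> last p = v \<and>
     (\<forall>j. Suc j < length p \<longrightarrow> adj (p ! j) (p ! Suc j))"

(* Graph distance: least number of edges of a walk from u to v (graph is connected). *)
definition gdist :: "('a \<Rightarrow> 'a \<Rightarrow> bool) \<Rightarrow> 'a \<Rightarrow> 'a \<Rightarrow> nat" where
  "gdist adj u v = (LEAST k. \<exists>p. is_walk adj p u v \<and> length p = Suc k)"

definition strongly_resolves :: "('a \<Rightarrow> 'a \<Rightarrow> bool) \<Rightarrow> 'a \<Rightarrow> 'a \<Rightarrow> 'a \<Rightarrow> bool" where
  "strongly_resolves adj w u v \<longleftrightarrow>
     gdist adj v w = gdist adj v u + gdist adj u w \<or>
     gdist adj u w = gdist adj u v + gdist adj v w"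

definition strong_resolving_set :: "'a set \<Rightarrow> ('a \<Rightarrow> 'a \<Rightarrow> bool) \<Rightarrow> 'a set \<Rightarrow> bool" where
  "strong_resolving_set V adj S \<longleftrightarrow> S \<subseteq> V \<and>
     (\<forall>u\<in>V. \<forall>v\<in>V. u \<noteq> v \<longrightarrow> (\<exists>w\<in>S. strongly_resolves adj w u v))"

end

theory Submission
  imports Defs
begin

definition sgo :: "nat \<Rightarrow> nat \<Rightarrow> nat \<Rightarrow> int" where
 "sgo n i j = (if 2 * (int j - int i) > int n then int j - int i - int n
    else if 2 * (int j - int i) < - int n then int j - int i + int n else int j - int i)"
definition m1 :: "int \<Rightarrow> int" where "m1 s = (if 0 \<le> s then s else - s - 1)"
definition m2 :: "int \<Rightarrow> int" where "m2 s = (if 0 < s then s - 1 else - s)"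
definition nx :: "nat \<Rightarrow> nat \<Rightarrow> nat" where "nx n i = (if Suc i = n then 0 else Suc i)"
definition pv :: "nat \<Rightarrow> nat \<Rightarrow> nat" where "pv n i = (if i = 0 then n - 1 else i - 1)"
fun fi :: "nat \<Rightarrow> uvert \<Rightarrow> uvert \<Rightarrow> int" where
  "fi n (A i) (A j) = (\<bar>sgo n i j\<bar> + 0)" |
  "fi n (A i) (B j) = (\<bar>sgo n i j\<bar> + 1)" |
  "fi n (A i) (C j) = (\<bar>sgo n i j\<bar> + 2)" |
  "fi n (A i) (D j) = (3 + m1 (sgo n i j))" |
  "fi n (A i) (E j) = (4 + m1 (sgo n i j))" |
  "fi n (B i) (A j) = (\<bar>sgo n i j\<bar> + 1)" |
  "fi n (B i) (B j) = (\<bar>sgo n i j\<bar> + 0)" |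
  "fi n (B i) (C j) = (\<bar>sgo n i j\<bar> + 1)" |
  "fi n (B i) (D j) = (2 + m1 (sgo n i j))" |
  "fi n (B i) (E j) = (3 + m1 (sgo n i j))" |
  "fi n (C i) (A j) = (\<bar>sgo n i j\<bar> + 2)" |
  "fi n (C i) (B j) = (\<bar>sgo n i j\<bar> + 1)" |
  "fi n (C i) (C j) = (min (2*\<bar>sgo n i j\<bar>) (2 + \<bar>sgo n i j\<bar>))" |
  "fi n (C i) (D j) = (min (2*m1 (sgo n i j)+1) (3 + m1 (sgo n i j)))" |
  "fi n (C i) (E j) = (2 + m1 (sgo n i j))" |
  "fi n (D i) (A j) = (3 + m2 (sgo n i j))" |
  "fi n (D i) (B j) = (2 + m2 (sgo n i j))" |
  "fi n (D i) (C j) = (min (2*m2 (sgo n i j)+1) (3 + m2 (sgo n i j)))" |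
  "fi n (D i) (D j) = (min (2*\<bar>sgo n i j\<bar>) (2 + \<bar>sgo n i j\<bar>))" |
  "fi n (D i) (E j) = (1 + \<bar>sgo n i j\<bar>)" |
  "fi n (E i) (A j) = (4 + m2 (sgo n i j))" |
  "fi n (E i) (B j) = (3 + m2 (sgo n i j))" |
  "fi n (E i) (C j) = (2 + m2 (sgo n i j))" |
  "fi n (E i) (D j) = (1 + \<bar>sgo n i j\<bar>)" |
  "fi n (E i) (E j) = (\<bar>sgo n i j\<bar>)"

definition fd :: "nat \<Rightarrow> uvert \<Rightarrow> uvert \<Rightarrow> nat" where "fd n x y = nat (fi n x y)"

lemma fi_nonneg: "0 \<le> fi n x y"
  by (cases x; cases y) (auto simp: m1_def m2_def)

lemma sgo_range: "i < n \<Longrightarrow> j < n \<Longrightarrow> n = 2*k+1 \<Longrightarrow> - int k \<le> sgo n i j \<and> sgo n i j \<le> int k"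
  unfolding sgo_def by (simp split: if_split; linarith)
lemma sgo_eq0: "i < n \<Longrightarrow> j < n \<Longrightarrow> sgo n i j = 0 \<longleftrightarrow> i = j"
  unfolding sgo_def by (rule iffI; simp split: if_splits; linarith)
lemma sgo_self[simp]: "sgo n i i = 0" by (simp add: sgo_def)
lemma sgo_nx_l: "i < n \<Longrightarrow> j < n \<Longrightarrow> n = 2*k+1 \<Longrightarrow>
  sgo n (nx n i) j = (if sgo n i j = - int k then int k else sgo n i j - 1)"
  unfolding sgo_def nx_def by (simp split: if_split; linarith)
lemma sgo_pv_l: "i < n \<Longrightarrow> j < n \<Longrightarrow> n = 2*k+1 \<Longrightarrow>
  sgo n (pv n i) j = (if sgo n i j = int k then - int k else sgo n i j + 1)"
  unfolding sgo_def pv_def by (simp split: if_split; linarith)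
lemma sgo_nx_r: "i < n \<Longrightarrow> j < n \<Longrightarrow> n = 2*k+1 \<Longrightarrow>
  sgo n i (nx n j) = (if sgo n i j = int k then - int k else sgo n i j + 1)"
  unfolding sgo_def nx_def by (simp split: if_split; linarith)
lemma sgo_sym: "i < n \<Longrightarrow> j < n \<Longrightarrow> n = 2*k+1 \<Longrightarrow> sgo n j i = - sgo n i j"
  unfolding sgo_def by (simp split: if_split; linarith)
lemma nx_lt[simp]: "i < n \<Longrightarrow> nx n i < n" by (simp add: nx_def)
lemma pv_lt[simp]: "i < n \<Longrightarrow> pv n i < n" unfolding pv_def by arith
lemma mod_nx: "i < n \<Longrightarrow> Suc i mod n = nx n i" by (simp add: nx_def)
lemma nx_pv: "i < n \<Longrightarrow> nx n (pv n i) = i" by (auto simp: nx_def pv_def)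
lemma walk_lower:
  assumes lip: "\<And>x y. adj x y \<Longrightarrow> f x v \<le> f y v + (1::nat)"
    and zero: "f v v = 0"
  shows "is_walk adj p u v \<Longrightarrow> f u v \<le> length p - 1"
proof (induction p arbitrary: u)
  case Nil then show ?case by (simp add: is_walk_def)
next
  case (Cons a p)
  show ?case
  proof (cases p)
    case Nil
    with Cons.prems have "u = v" by (auto simp: is_walk_def)
    then show ?thesis by (simp add: zero)
  next
    case (Cons b q)
    have au: "a = u" using Cons.prems by (simp add: is_walk_def)
    have adj: "adj u b" using Cons.prems \<open>p = b # q\<close> au
      by (auto simp: is_walk_def dest: spec[of _ 0])
    have w: "is_walk adj p b v"
      using Cons.prems \<open>p = b # q\<close> unfolding is_walk_def
      by (auto dest: spec[of _ "Suc _"])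
    have "f b v \<le> length p - 1" using Cons.IH[OF w] .
    moreover have "f u v \<le> f b v + 1" using lip[OF adj] .
    ultimately show ?thesis using \<open>p = b # q\<close> by simp
  qed
qed

lemma walk_cons:
  assumes "is_walk adj p y z" "adj x y"
  shows "is_walk adj (x # p) x z"
proof -
  have p: "p \<noteq> []" "hd p = y" "last p = z"
    and st: "\<And>j. Suc j < length p \<Longrightarrow> adj (p ! j) (p ! Suc j)"
    using assms(1) by (auto simp: is_walk_def)
  have "adj ((x # p) ! j) ((x # p) ! Suc j)" if "Suc j < length (x # p)" for j
  proof (cases j)
    case 0
    then show ?thesis using p assms(2) by (simp add: hd_conv_nth)
  next
    case (Suc j')
    then show ?thesis using st[of j'] that by simp
  qed
  then show ?thesis using p by (simp add: is_walk_def)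
qed

lemma walk_upper:
  assumes desc: "\<And>x. x \<in> V \<Longrightarrow> x \<noteq> z \<Longrightarrow> \<exists>y. adj x y \<and> y \<in> V \<and> f y z + 1 = (f x z::nat)"
    and zero: "f z z = 0"
  shows "x \<in> V \<Longrightarrow> \<exists>p. is_walk adj p x z \<and> length p = Suc (f x z)"
proof (induction "f x z" arbitrary: x rule: less_induct)
  case less
  show ?case
  proof (cases "x = z")
    case True
    then show ?thesis using zero by (intro exI[of _ "[z]"]) (simp add: is_walk_def)
  next
    case False
    then obtain y where y: "adj x y" "y \<in> V" "f y z + 1 = f x z" using desc less.prems by blast
    then obtain p where p: "is_walk adj p y z" "length p = Suc (f y z)"
      using less.hyps[of y] by auto
    show ?thesis using walk_cons[OF p(1) y(1)] p(2) y(3) by (intro exI[of _ "x # p"]) simp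
  qed
qed

lemma gdist_eq:
  assumes lip: "\<And>x y z. adj x y \<Longrightarrow> z \<in> V \<Longrightarrow> f x z \<le> f y z + (1::nat)"
    and zero: "\<And>x. f x x = 0"
    and desc: "\<And>x z. x \<in> V \<Longrightarrow> z \<in> V \<Longrightarrow> x \<noteq> z \<Longrightarrow> \<exists>y. adj x y \<and> y \<in> V \<and> f y z + 1 = f x z"
    and xz: "x \<in> V" "z \<in> V"
  shows "gdist adj x z = f x z"
  unfolding gdist_def
proof (rule Least_equality)
  show "\<exists>p. is_walk adj p x z \<and> length p = Suc (f x z)"
  proof (rule walk_upper[where V=V])
    show "\<And>x'. x' \<in> V \<Longrightarrow> x' \<noteq> z \<Longrightarrow> \<exists>y. adj x' y \<and> y \<in> V \<and> f y z + 1 = f x' z"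
      using desc xz(2) by blast
  qed (use zero xz in auto)
next
  fix k assume "\<exists>p. is_walk adj p x z \<and> length p = Suc k"
  then obtain p where "is_walk adj p x z" "length p = Suc k" by blast
  then show "f x z \<le> k" using walk_lower[of adj f z p x] lip zero xz by auto
qed


lemma edges_in:
  assumes "i < n"
  shows "(A i, A (nx n i)) \<in> U_edges n" "(B i, B (nx n i)) \<in> U_edges n" "(E i, E (nx n i)) \<in> U_edges n"
    "(A i, B i) \<in> U_edges n" "(B i, C i) \<in> U_edges n" "(C i, D i) \<in> U_edges n" "(D i, E i) \<in> U_edges n"
    "(C (nx n i), D i) \<in> U_edges n"
  using assms by (auto simp: U_edges_def mod_nx intro!: bexI[of _ i])

lemma adjs:
  assumes "i < n"
  shows "U_adj n (A i) (A (nx n i))" "U_adj n (A i) (A (pv n i))" "U_adj n (A i) (B i)"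
    "U_adj n (B i) (B (nx n i))" "U_adj n (B i) (B (pv n i))" "U_adj n (B i) (A i)" "U_adj n (B i) (C i)"
    "U_adj n (C i) (B i)" "U_adj n (C i) (D i)" "U_adj n (C i) (D (pv n i))"
    "U_adj n (D i) (C i)" "U_adj n (D i) (C (nx n i))" "U_adj n (D i) (E i)"
    "U_adj n (E i) (E (nx n i))" "U_adj n (E i) (E (pv n i))" "U_adj n (E i) (D i)"
  using edges_in[OF assms] edges_in[OF pv_lt[OF assms]] nx_pv[OF assms]
  by (auto simp: U_adj_def)

lemma verts_in:
  assumes "i < n" shows "A i \<in> U_verts n" "B i \<in> U_verts n" "C i \<in> U_verts n" "D i \<in> U_verts n" "E i \<in> U_verts n"
  using assms by (auto simp: U_verts_def)

lemma lip_edge: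
  assumes "(x,y) \<in> U_edges n" "z \<in> U_verts n" "n = 2*k+1"
  shows "fi n x z \<le> fi n y z + 1 \<and> fi n y z \<le> fi n x z + 1"
proof -
  from assms(1) obtain i where i: "i<n" and xy: "(x,y) \<in> {(A i, A (nx n i)), (B i, B (nx n i)), (E i, E (nx n i)),
      (A i, B i), (B i, C i), (C i, D i), (D i, E i), (C (nx n i), D i)}" by (auto simp: U_edges_def mod_nx)
  from assms(2) obtain j where j: "j<n" and z: "z \<in> {A j, B j, C j, D j, E j}" by (auto simp: U_verts_def)
  have r: "- int k \<le> sgo n i j \<and> sgo n i j \<le> int k" using sgo_range[OF i j assms(3)] .
  note s = sgo_nx_l[OF i j assms(3)]
  from xy z r show ?thesis
    by (elim insertE emptyE; simp add: s m1_def m2_def min_def abs_if split: if_splits; linarith)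
qed

lemma desc_A:
  assumes i: "i < n" and j: "j < n" and n: "n = 2*k+1" and z: "z \<in> {A j, B j, C j, D j, E j}" and ne: "A i \<noteq> z"
  shows "fi n (A (nx n i)) z + 1 = fi n (A i) z \<or> fi n (A (pv n i)) z + 1 = fi n (A i) z \<or> fi n (B i) z + 1 = fi n (A i) z"
proof -
  have r: "- int k \<le> sgo n i j \<and> sgo n i j \<le> int k" using sgo_range[OF i j n] .
  have s0: "i \<noteq> j \<longrightarrow> sgo n i j \<noteq> 0" using sgo_eq0[OF i j] by auto
  note s = sgo_nx_l[OF i j n] sgo_pv_l[OF i j n]
  from z ne s0 r show ?thesis
    apply -
    apply (elim insertE emptyE)
        apply (rule ccontr; simp add: s m1_def m2_def min_def abs_if split: if_splits; linarith)+
    done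
qed

lemma desc_B:
  assumes i: "i < n" and j: "j < n" and n: "n = 2*k+1" and z: "z \<in> {A j, B j, C j, D j, E j}" and ne: "B i \<noteq> z"
  shows "fi n (B (nx n i)) z + 1 = fi n (B i) z \<or> fi n (B (pv n i)) z + 1 = fi n (B i) z \<or> fi n (A i) z + 1 = fi n (B i) z \<or> fi n (C i) z + 1 = fi n (B i) z"
proof -
  have r: "- int k \<le> sgo n i j \<and> sgo n i j \<le> int k" using sgo_range[OF i j n] .
  have s0: "i \<noteq> j \<longrightarrow> sgo n i j \<noteq> 0" using sgo_eq0[OF i j] by auto
  note s = sgo_nx_l[OF i j n] sgo_pv_l[OF i j n]
  from z ne s0 r show ?thesis
    apply -
    apply (elim insertE emptyE)
        apply (rule ccontr; simp add: s m1_def m2_def min_def abs_if split: if_splits; linarith)+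
    done
qed

lemma desc_C:
  assumes i: "i < n" and j: "j < n" and n: "n = 2*k+1" and z: "z \<in> {A j, B j, C j, D j, E j}" and ne: "C i \<noteq> z"
  shows "fi n (B i) z + 1 = fi n (C i) z \<or> fi n (D i) z + 1 = fi n (C i) z \<or> fi n (D (pv n i)) z + 1 = fi n (C i) z"
proof -
  have r: "- int k \<le> sgo n i j \<and> sgo n i j \<le> int k" using sgo_range[OF i j n] .
  have s0: "i \<noteq> j \<longrightarrow> sgo n i j \<noteq> 0" using sgo_eq0[OF i j] by auto
  note s = sgo_nx_l[OF i j n] sgo_pv_l[OF i j n]
  from z ne s0 r show ?thesis
    apply -
    apply (elim insertE emptyE)
        apply (rule ccontr; simp add: s m1_def m2_def min_def abs_if split: if_splits; linarith)+
    done
qed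

lemma desc_D:
  assumes i: "i < n" and j: "j < n" and n: "n = 2*k+1" and z: "z \<in> {A j, B j, C j, D j, E j}" and ne: "D i \<noteq> z"
  shows "fi n (C i) z + 1 = fi n (D i) z \<or> fi n (C (nx n i)) z + 1 = fi n (D i) z \<or> fi n (E i) z + 1 = fi n (D i) z"
proof -
  have r: "- int k \<le> sgo n i j \<and> sgo n i j \<le> int k" using sgo_range[OF i j n] .
  have s0: "i \<noteq> j \<longrightarrow> sgo n i j \<noteq> 0" using sgo_eq0[OF i j] by auto
  note s = sgo_nx_l[OF i j n] sgo_pv_l[OF i j n]
  from z ne s0 r show ?thesis
    apply -
    apply (elim insertE emptyE)
        apply (rule ccontr; simp add: s m1_def m2_def min_def abs_if split: if_splits; linarith)+
    done
qed

lemma desc_E: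
  assumes i: "i < n" and j: "j < n" and n: "n = 2*k+1" and z: "z \<in> {A j, B j, C j, D j, E j}" and ne: "E i \<noteq> z"
  shows "fi n (E (nx n i)) z + 1 = fi n (E i) z \<or> fi n (E (pv n i)) z + 1 = fi n (E i) z \<or> fi n (D i) z + 1 = fi n (E i) z"
proof -
  have r: "- int k \<le> sgo n i j \<and> sgo n i j \<le> int k" using sgo_range[OF i j n] .
  have s0: "i \<noteq> j \<longrightarrow> sgo n i j \<noteq> 0" using sgo_eq0[OF i j] by auto
  note s = sgo_nx_l[OF i j n] sgo_pv_l[OF i j n]
  from z ne s0 r show ?thesis
    apply -
    apply (elim insertE emptyE)
        apply (rule ccontr; simp add: s m1_def m2_def min_def abs_if split: if_splits; linarith)+
    done
qed

lemma desc:
  assumes "x \<in> U_verts n" "z \<in> U_verts n" "x \<noteq> z" "n = 2*k+1"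
  shows "\<exists>y. U_adj n x y \<and> y \<in> U_verts n \<and> fi n y z + 1 = fi n x z"
proof -
  from assms(1) obtain i where i: "i<n" and x: "x \<in> {A i, B i, C i, D i, E i}" by (auto simp: U_verts_def)
  from assms(2) obtain j where j: "j<n" and z: "z \<in> {A j, B j, C j, D j, E j}" by (auto simp: U_verts_def)
  note V = verts_in[OF i] verts_in[OF nx_lt[OF i]] verts_in[OF pv_lt[OF i]]
  note ad = adjs[OF i]
  from x consider "x = A i" | "x = B i" | "x = C i" | "x = D i" | "x = E i" by blast
  then show ?thesis
  proof cases
    case 1 then show ?thesis using desc_A[OF i j assms(4) z] assms(3) ad V by blast
  next
    case 2 then show ?thesis using desc_B[OF i j assms(4) z] assms(3) ad V by blast
  next
    case 3 then show ?thesis using desc_C[OF i j assms(4) z] assms(3) ad V by blast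
  next
    case 4 then show ?thesis using desc_D[OF i j assms(4) z] assms(3) ad V by blast
  next
    case 5 then show ?thesis using desc_E[OF i j assms(4) z] assms(3) ad V by blast
  qed
qed

lemma fd_self: "fd n x x = 0"
  by (cases x) (simp_all add: fd_def)

lemma gd:
  assumes "n = 2*k+1" "x \<in> U_verts n" "z \<in> U_verts n"
  shows "gdist (U_adj n) x z = fd n x z"
proof (rule gdist_eq[where V="U_verts n"])
  show "fd n x' z' \<le> fd n y' z' + 1" if "U_adj n x' y'" "z' \<in> U_verts n" for x' y' z'
  proof -
    have "fi n x' z' \<le> fi n y' z' + 1"
      using that lip_edge[OF _ _ assms(1)] unfolding U_adj_def by blast
    then show ?thesis using fi_nonneg[of n y' z'] fi_nonneg[of n x' z'] unfolding fd_def by (simp add: nat_le_iff)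
  qed
  show "\<exists>y. U_adj n x' y \<and> y \<in> U_verts n \<and> fd n y z' + 1 = fd n x' z'"
    if xz: "x' \<in> U_verts n" "z' \<in> U_verts n" "x' \<noteq> z'" for x' z'
  proof -
    obtain y where y: "U_adj n x' y" "y \<in> U_verts n" "fi n y z' + 1 = fi n x' z'"
      using desc[OF xz assms(1)] by blast
    have "fd n y z' + 1 = fd n x' z'"
      using y(3) fi_nonneg[of n y z'] unfolding fd_def by (metis nat_add_distrib nat_one_as_int zero_le_one)
    with y show ?thesis by blast
  qed
qed (use assms fd_self in auto)

lemma fd_add: "fi n a b = fi n c d + fi n e f \<Longrightarrow> fd n a b = fd n c d + fd n e f"
  unfolding fd_def using fi_nonneg[of n c d] fi_nonneg[of n e f] by (simp add: nat_add_distrib)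

lemma res_B:
  assumes i: "i < n" and j: "j < n" and n: "n = 2*k+1" and v: "v \<in> {B j, D j, E j}" and ne: "v \<noteq> B i"
  shows "fi n v (A i) = fi n v (B i) + fi n (B i) (A i)"
proof -
  have r: "- int k \<le> sgo n i j \<and> sgo n i j \<le> int k" using sgo_range[OF i j n] .
  have s0: "i \<noteq> j \<longrightarrow> sgo n i j \<noteq> 0" using sgo_eq0[OF i j] by auto
  note s = sgo_sym[OF i j n]
  from v ne s0 r show ?thesis
    apply -
    apply (elim insertE emptyE)
      apply (simp add: s m1_def m2_def min_def abs_if split: if_splits; linarith)+
    done
qed

lemma res_DE:
  assumes i: "i < n" and j: "j < n" and n: "n = 2*k+1" and k: "1 \<le> k"
    and u: "u \<in> {D i, E i}" and v: "v \<in> {D j, E j}" and ne: "u \<noteq> v"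
    and nn: "\<not> (u = E i \<and> v = D j)"
  shows "fi n v (if 0 \<le> sgo n i j then C i else C (nx n i)) = fi n v u + fi n u (if 0 \<le> sgo n i j then C i else C (nx n i))"
proof -
  have r: "- int k \<le> sgo n i j \<and> sgo n i j \<le> int k" using sgo_range[OF i j n] .
  have s0: "i \<noteq> j \<longrightarrow> sgo n i j \<noteq> 0" using sgo_eq0[OF i j] by auto
  note s = sgo_nx_r[OF j i n] sgo_nx_r[OF i i n] sgo_sym[OF i j n]
  from u v ne nn s0 r k show ?thesis
    apply -
    apply (elim insertE emptyE)
          apply (simp add: s m1_def m2_def min_def abs_if split: if_splits; linarith)+
    done
qed

theorem lemma4p6:
  fixes n k :: nat
  assumes "n = 2 * k + 1" and "k \<ge> 1"
  shows "strong_resolving_set (U_verts n) (U_adj n) (\<Union>i\<in>{0..<n}. {A i, C i})"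
proof -
  note n = assms(1)
  let ?S = "\<Union>i\<in>{0..<n}. {A i, C i}"
  have "\<exists>w\<in>?S. strongly_resolves (U_adj n) w u v"
    if u: "u \<in> U_verts n" and v: "v \<in> U_verts n" and uv: "u \<noteq> v" for u v
  proof -
    from u obtain i where i: "i<n" and ui: "u \<in> {A i, B i, C i, D i, E i}" by (auto simp: U_verts_def)
    from v obtain j where j: "j<n" and vj: "v \<in> {A j, B j, C j, D j, E j}" by (auto simp: U_verts_def)
    note V = verts_in[OF i] verts_in[OF j]
    show ?thesis
    proof (cases "u \<in> {A i, C i}")
      case True
      then have "u \<in> ?S" using i by auto
      moreover have "strongly_resolves (U_adj n) u u v"
        unfolding strongly_resolves_def using gd[OF n u u] fd_self by simp
      ultimately show ?thesis by blast
    next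
      case nu: False
      show ?thesis
      proof (cases "v \<in> {A j, C j}")
        case True
        then have "v \<in> ?S" using j by auto
        moreover have "strongly_resolves (U_adj n) v u v"
          unfolding strongly_resolves_def using gd[OF n v v] fd_self by simp
        ultimately show ?thesis by blast
      next
        case nv: False
        show ?thesis
        proof (cases "u = B i")
          case True
          have "A i \<in> ?S" using i by auto
          moreover have "strongly_resolves (U_adj n) (A i) u v"
          proof -
            have "v \<in> {B j, D j, E j}" using vj nv by auto
            then have "fd n v (A i) = fd n v (B i) + fd n (B i) (A i)"
              using res_B[OF i j n, of v] True uv by (intro fd_add) auto
            then show ?thesis unfolding strongly_resolves_def
              using gd[OF n v V(1)] gd[OF n v u] gd[OF n u V(1)] True by simp
          qed
          ultimately show ?thesis by blast
        next
          case nbu: False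
          show ?thesis
          proof (cases "v = B j")
            case True
            have "A j \<in> ?S" using j by auto
            moreover have "strongly_resolves (U_adj n) (A j) u v"
            proof -
              have "u \<in> {B i, D i, E i}" using ui nu by auto
              then have "fd n u (A j) = fd n u (B j) + fd n (B j) (A j)"
                using res_B[OF j i n, of u] True uv by (intro fd_add) auto
              then show ?thesis unfolding strongly_resolves_def
                using gd[OF n u V(6)] gd[OF n u v] gd[OF n v V(6)] True by simp
            qed
            ultimately show ?thesis by blast
          next
            case nbv: False
            have uDE: "u \<in> {D i, E i}" using ui nu nbu by auto
            have vDE: "v \<in> {D j, E j}" using vj nv nbv by auto
            show ?thesis
            proof (cases "u = E i \<and> v = D j")
              case False
              define w where "w = (if 0 \<le> sgo n i j then C i else C (nx n i))"
              have wS: "w \<in> ?S" using i by (auto simp: w_def)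
              have wV: "w \<in> U_verts n" using verts_in[OF i] verts_in[OF nx_lt[OF i]] by (auto simp: w_def)
              have "fd n v w = fd n v u + fd n u w"
                unfolding w_def by (rule fd_add, rule res_DE[OF i j n assms(2) uDE vDE uv False])
              then have "strongly_resolves (U_adj n) w u v"
                unfolding strongly_resolves_def using gd[OF n v wV] gd[OF n v u] gd[OF n u wV] by simp
              with wS show ?thesis by blast
            next
              case True
              define w where "w = (if 0 \<le> sgo n j i then C j else C (nx n j))"
              have wS: "w \<in> ?S" using j by (auto simp: w_def)
              have wV: "w \<in> U_verts n" using verts_in[OF j] verts_in[OF nx_lt[OF j]] by (auto simp: w_def)
              have "fd n u w = fd n u v + fd n v w"
                unfolding w_def by (rule fd_add, rule res_DE[OF j i n assms(2) vDE uDE uv[symmetric]]) (use True in auto)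
              then have "strongly_resolves (U_adj n) w u v"
                unfolding strongly_resolves_def using gd[OF n u wV] gd[OF n u v] gd[OF n v wV] by simp
              with wS show ?thesis by blast
            qed
          qed
        qed
      qed
    qed
  qed
  moreover have "?S \<subseteq> U_verts n" by (auto simp: U_verts_def)
  ultimately show ?thesis unfolding strong_resolving_set_def by blast
qed

end
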